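(* Let $\mathcal{D}$ be a distribution supported on $[0,1]$ with largest median $\nu=\sup\{y:\Pr_{x\sim\mathcal{D}}(x\le y)\le\frac12\}$. Then for all $n,m$ and every preference profile $\sigma$ on $n$ voters and $m$ alternatives, the alternative $f(\sigma)$ selected by binomial voting satisfies $\mathbb{E}[\mathrm{sw}(f(\sigma),u)]\ge\frac{\nu}{2}\max_{j\in A}\mathbb{E}[\mathrm{sw}(j,u)]$; i.e., binomial voting is a $\frac{\nu}{2}$-expected-welfare-maximizing rule for $\mathcal{D}$.
   Context: There are $n$ voters and $m$ alternatives $A=\{1,\dots,m\}$. A preference profile $\sigma$ consists of a ranking of $A$ for each voter; position $1$ is the top. Given $\mathcal{D}$ and $\sigma$, a random utility profile $u$ consistent with $\sigma$ is generated as follows: independently for each voter $i$, draw $m$ i.i.d. samples from $\mathcal{D}$ and assign them, from highest to lowest, to the alternatives in the order of voter $i$'s ranking. The social welfare of $j$ is $\mathrm{sw}(j,u)=\sum_i u_{ij}$; expectations are over $u$. Binomial voting is the scoring rule in which each voter gives $\sum_{\ell=k}^m\binom{m}{\ell}$ points to the alternative she ranks in position $k$; it selects an alternative with the largest total score (ties broken arbitrarily). *)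

theory Defs
  imports "HOL-Probability.Probability"
begin

text \<open>A preference profile is given by
  pos i j = position (1 = top) of alternative j in voter i's ranking; for each voter
  pos i is a bijection from the alternatives onto the positions 1..m.\<close>

definition is_profile :: "nat \<Rightarrow> nat \<Rightarrow> (nat \<Rightarrow> nat \<Rightarrow> nat) \<Rightarrow> bool" where
  "is_profile n m pos \<longleftrightarrow> (\<forall>i\<in>{1..n}. bij_betw (pos i) {1..m} {1..m})"

definition kth_largest :: "nat \<Rightarrow> (nat \<Rightarrow> real) \<Rightarrow> nat \<Rightarrow> real" where
  "kth_largest m x k = rev (sort (map x [0..<m])) ! (k - 1)"

text \<open>Sample space of the random utility profile: for each voter i and each sample
  index s < m an independent draw from D.\<close>
definition sample_space :: "nat \<Rightarrow> nat \<Rightarrow> real measure \<Rightarrow> (nat \<times> nat \<Rightarrow> real) measure" where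
  "sample_space n m D = PiM ({1..n} \<times> {..<m}) (\<lambda>_. D)"

text \<open>Utility u i j of voter i for alternative j consistent with the profile:
  the samples of voter i assigned from highest to lowest along her ranking.\<close>
definition utility :: "nat \<Rightarrow> (nat \<Rightarrow> nat \<Rightarrow> nat) \<Rightarrow> (nat \<times> nat \<Rightarrow> real) \<Rightarrow> nat \<Rightarrow> nat \<Rightarrow> real" where
  "utility m pos \<omega> i j = kth_largest m (\<lambda>s. \<omega> (i, s)) (pos i j)"

definition sw :: "nat \<Rightarrow> nat \<Rightarrow> (nat \<Rightarrow> nat \<Rightarrow> nat) \<Rightarrow> nat \<Rightarrow> (nat \<times> nat \<Rightarrow> real) \<Rightarrow> real" where
  "sw n m pos j \<omega> = (\<Sum>i\<in>{1..n}. utility m pos \<omega> i j)"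

definition expected_sw :: "real measure \<Rightarrow> nat \<Rightarrow> nat \<Rightarrow> (nat \<Rightarrow> nat \<Rightarrow> nat) \<Rightarrow> nat \<Rightarrow> real" where
  "expected_sw D n m pos j = (\<integral>\<omega>. sw n m pos j \<omega> \<partial>sample_space n m D)"

definition binom_points :: "nat \<Rightarrow> nat \<Rightarrow> nat" where
  "binom_points m k = (\<Sum>l=k..m. m choose l)"

definition binom_score :: "nat \<Rightarrow> nat \<Rightarrow> (nat \<Rightarrow> nat \<Rightarrow> nat) \<Rightarrow> nat \<Rightarrow> nat" where
  "binom_score n m pos j = (\<Sum>i\<in>{1..n}. binom_points m (pos i j))"

text \<open>j is a possible outcome of binomial voting (ties broken arbitrarily).\<close>
definition binomial_winner :: "nat \<Rightarrow> nat \<Rightarrow> (nat \<Rightarrow> nat \<Rightarrow> nat) \<Rightarrow> nat \<Rightarrow> bool" where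
  "binomial_winner n m pos j \<longleftrightarrow> j \<in> {1..m} \<and> (\<forall>j'\<in>{1..m}. binom_score n m pos j' \<le> binom_score n m pos j)"

definition largest_median :: "real measure \<Rightarrow> real" where
  "largest_median D = Sup {y. measure D {x. x \<le> y} \<le> 1/2}"

end

theory Submission
  imports Defs
begin

lemma kth_ge_iff:
  assumes k: "1 \<le> k" "k \<le> m"
  shows "(t \<le> kth_largest m x k) \<longleftrightarrow> (k \<le> card {s. s < m \<and> t \<le> x s})"
proof -
  define xs where "xs = map x [0..<m]"
  define L where "L = rev (sort xs)"
  have lenL: "length L = m" by (simp add: L_def xs_def)
  have c1: "card {s. s < m \<and> t \<le> x s} = length (filter (\<lambda>v. t \<le> v) xs)"
    unfolding length_filter_conv_card xs_def by (intro arg_cong[where f=card]) auto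
  have c2: "length (filter (\<lambda>v. t \<le> v) L) = length (filter (\<lambda>v. t \<le> v) xs)"
  proof -
    have "mset L = mset xs" by (simp add: L_def)
    then show ?thesis by (metis mset_filter size_mset)
  qed
  have c3: "length (filter (\<lambda>v. t \<le> v) L) = card {i. i < m \<and> t \<le> L ! i}"
    unfolding length_filter_conv_card lenL ..
  have sortedS: "sorted (sort xs)" by simp
  have desc: "L ! b \<le> L ! a" if "a \<le> b" "b < m" for a b
  proof -
    have ls: "length (sort xs) = m" by (simp add: xs_def)
    have "L ! b = sort xs ! (m - Suc b)" "L ! a = sort xs ! (m - Suc a)"
      using that ls by (auto simp: L_def rev_nth)
    moreover have "sort xs ! (m - Suc b) \<le> sort xs ! (m - Suc a)"
      by (rule sorted_nth_mono[OF sortedS]) (use that ls in auto)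
    ultimately show ?thesis by simp
  qed
  have kl: "kth_largest m x k = L ! (k - 1)" by (simp add: kth_largest_def L_def xs_def)
  show ?thesis
  proof
    assume "t \<le> kth_largest m x k"
    hence sub: "{..<k} \<subseteq> {i. i < m \<and> t \<le> L ! i}"
    proof (intro subsetI)
      fix i assume "t \<le> kth_largest m x k" "i \<in> {..<k}"
      moreover have "i \<le> k - 1" "k - 1 < m" using k \<open>i \<in> {..<k}\<close> by auto
      ultimately show "i \<in> {i. i < m \<and> t \<le> L ! i}"
        using desc[of i "k-1"] kl by auto
    qed
    have "k \<le> card {i. i < m \<and> t \<le> L ! i}"
      using card_mono[OF _ sub] by simp
    thus "k \<le> card {s. s < m \<and> t \<le> x s}" using c1 c2 c3 by simp
  next
    assume a: "k \<le> card {s. s < m \<and> t \<le> x s}"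
    show "t \<le> kth_largest m x k"
    proof (rule ccontr)
      assume "\<not> t \<le> kth_largest m x k"
      hence sub: "{i. i < m \<and> t \<le> L ! i} \<subseteq> {..<k-1}"
      proof (intro subsetI)
        fix i assume "\<not> t \<le> kth_largest m x k" "i \<in> {i. i < m \<and> t \<le> L ! i}"
        then have "i < m" "t \<le> L ! i" "L ! (k-1) < t" using kl by auto
        show "i \<in> {..<k-1}"
        proof (rule ccontr)
          assume "i \<notin> {..<k-1}"
          then have "k - 1 \<le> i" by simp
          then have "L ! i \<le> L ! (k-1)" using desc[of "k-1" i] \<open>i < m\<close> by simp
          then show False using \<open>t \<le> L ! i\<close> \<open>L ! (k-1) < t\<close> by simp
        qed
      qed
      have "card {i. i < m \<and> t \<le> L ! i} \<le> k - 1"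
        using card_mono[OF _ sub] by simp
      thus False using a c1 c2 c3 k by simp
    qed
  qed
qed

fun gtail :: "nat \<Rightarrow> nat \<Rightarrow> real \<Rightarrow> real" where
  "gtail m 0 p = 1"
| "gtail 0 (Suc k) p = 0"
| "gtail (Suc m) (Suc k) p = p * gtail m k p + (1 - p) * gtail m (Suc k) p"

lemma gtail_bounds: "0 \<le> p \<Longrightarrow> p \<le> 1 \<Longrightarrow> 0 \<le> gtail m k p \<and> gtail m k p \<le> 1"
proof (induction m arbitrary: k)
  case 0 then show ?case by (cases k) auto
next
  case (Suc m)
  show ?case
  proof (cases k)
    case (Suc k')
    have a: "0 \<le> gtail m k' p" "gtail m k' p \<le> 1" "0 \<le> gtail m (Suc k') p" "gtail m (Suc k') p \<le> 1"
      using Suc.IH Suc.prems by auto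
    have "p * gtail m k' p + (1 - p) * gtail m (Suc k') p \<le> p * 1 + (1-p) * 1"
      using a Suc.prems by (intro add_mono mult_left_mono) auto
    then show ?thesis using Suc a Suc.prems by simp
  qed simp
qed

lemma gtail_anti: "0 \<le> p \<Longrightarrow> p \<le> 1 \<Longrightarrow> gtail m (Suc k) p \<le> gtail m k p"
proof (induction m arbitrary: k)
  case 0 then show ?case by (cases k) auto
next
  case (Suc m)
  show ?case
  proof (cases k)
    case 0 then show ?thesis using gtail_bounds[OF Suc.prems, of "Suc m" 1] by simp
  next
    case (Suc k')
    have "p * gtail m (Suc k') p + (1 - p) * gtail m (Suc (Suc k')) p \<le> p * gtail m k' p + (1 - p) * gtail m (Suc k') p"
      using Suc.IH Suc.prems by (intro add_mono mult_left_mono) auto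
    then show ?thesis using Suc by simp
  qed
qed

lemma gtail_mono: "0 \<le> p \<Longrightarrow> p \<le> q \<Longrightarrow> q \<le> 1 \<Longrightarrow> gtail m k p \<le> gtail m k q"
proof (induction m arbitrary: k)
  case 0 then show ?case by (cases k) auto
next
  case (Suc m)
  show ?case
  proof (cases k)
    case (Suc k')
    have "p * gtail m k' p + (1 - p) * gtail m (Suc k') p
        = gtail m (Suc k') p + p * (gtail m k' p - gtail m (Suc k') p)" by (simp add: algebra_simps)
    also have "\<dots> \<le> gtail m (Suc k') p + q * (gtail m k' p - gtail m (Suc k') p)"
      using gtail_anti[of p m k'] Suc.prems by (intro add_left_mono mult_right_mono) auto
    also have "\<dots> = q * gtail m k' p + (1 - q) * gtail m (Suc k') p" by (simp add: algebra_simps)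
    also have "\<dots> \<le> q * gtail m k' q + (1 - q) * gtail m (Suc k') q"
      using Suc.IH Suc.prems by (intro add_mono mult_left_mono) auto
    finally show ?thesis using Suc by simp
  qed simp
qed

lemma binom_points_Suc: "binom_points (Suc m) (Suc k) = binom_points m k + binom_points m (Suc k)"
proof -
  have "binom_points (Suc m) (Suc k) = (\<Sum>i=k..m. Suc m choose Suc i)"
    unfolding binom_points_def by (rule sum.shift_bounds_cl_Suc_ivl)
  also have "\<dots> = (\<Sum>i=k..m. m choose i) + (\<Sum>i=k..m. m choose Suc i)"
    by (simp add: sum.distrib)
  also have "(\<Sum>i=k..m. m choose Suc i) = (\<Sum>i=Suc k..Suc m. m choose i)"
    by (rule sum.shift_bounds_cl_Suc_ivl[symmetric])
  also have "\<dots> = binom_points m (Suc k)"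
    unfolding binom_points_def by simp
  finally show ?thesis unfolding binom_points_def by simp
qed

lemma gtail_half: "gtail m k (1/2) = binom_points m k / 2 ^ m"
proof (induction m arbitrary: k)
  case 0 then show ?case by (cases k) (auto simp: binom_points_def)
next
  case (Suc m)
  show ?case
  proof (cases k)
    case 0
    have "binom_points (Suc m) 0 = 2 ^ Suc m"
      unfolding binom_points_def atLeast0AtMost by (rule choose_row_sum)
    then show ?thesis using 0 by simp
  next
    case (Suc k')
    then show ?thesis using Suc.IH by (simp add: binom_points_Suc field_simps)
  qed
qed

lemma double_sum: "(\<Sum>k=1..N. \<Sum>l=k..N. f l) = (\<Sum>l=1..N. of_nat l * (f l :: 'a::comm_semiring_1))"
proof (induction N)
  case 0 then show ?case by simp
next
  case (Suc N)
  have "(\<Sum>k=1..Suc N. \<Sum>l=k..Suc N. f l) = (\<Sum>k=1..N. \<Sum>l=k..Suc N. f l) + f (Suc N)"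
    by simp
  also have "(\<Sum>k=1..N. \<Sum>l=k..Suc N. f l) = (\<Sum>k=1..N. (\<Sum>l=k..N. f l) + f (Suc N))"
    by (rule sum.cong) auto
  also have "\<dots> = (\<Sum>k=1..N. \<Sum>l=k..N. f l) + of_nat N * f (Suc N)"
    by (simp add: sum.distrib)
  finally show ?case using Suc.IH by (simp add: algebra_simps)
qed

lemma sum_binom_points: "(\<Sum>k=1..m. binom_points m k) = m * 2 ^ (m - 1)"
proof -
  have "(\<Sum>k=1..m. binom_points m k) = (\<Sum>l=1..m. l * (m choose l))"
    unfolding binom_points_def using double_sum[of "\<lambda>l. m choose l" m] by simp
  also have "\<dots> = (\<Sum>l=0..m. l * (m choose l))"
    using sum.atLeast_Suc_atMost[of 0 m "\<lambda>l. l * (m choose l)"] by simp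
  also have "\<dots> = (\<Sum>l\<le>m. l * (m choose l))"
    by (rule sum.cong) auto
  finally show ?thesis using choose_linear_sum by simp
qed

lemma card_as_sum: "finite J \<Longrightarrow> real (card {s\<in>J. P s}) = (\<Sum>s\<in>J. if P s then 1 else 0)"
  by (simp add: sum.inter_filter[symmetric])

lemma kth_measurable:
  assumes f: "\<And>s. s < m \<Longrightarrow> f s \<in> borel_measurable M" and k: "1 \<le> k" "k \<le> m"
  shows "(\<lambda>\<omega>. kth_largest m (\<lambda>s. f s \<omega>) k) \<in> borel_measurable M"
proof (subst borel_measurable_iff_ge, intro allI)
  fix a
  have "{w\<in>space M. a \<le> kth_largest m (\<lambda>s. f s w) k}
      = {w\<in>space M. real k \<le> (\<Sum>s\<in>{..<m}. if a \<le> f s w then 1 else 0)}"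
  proof -
    have "(k \<le> card {s. s < m \<and> a \<le> f s w}) = (real k \<le> (\<Sum>s\<in>{..<m}. if a \<le> f s w then 1 else 0))" for w
    proof -
      have "{s. s < m \<and> a \<le> f s w} = {s\<in>{..<m}. a \<le> f s w}" by auto
      then have "real (card {s. s < m \<and> a \<le> f s w}) = (\<Sum>s\<in>{..<m}. if a \<le> f s w then 1 else 0)"
        using card_as_sum[of "{..<m}"] by simp
      then show ?thesis by (metis of_nat_le_iff)
    qed
    then show ?thesis using kth_ge_iff[OF k, of a] by auto
  qed
  also have "\<dots> \<in> sets M"
    using f by measurable
  finally show "{w\<in>space M. a \<le> kth_largest m (\<lambda>s. f s w) k} \<in> sets M" .
qed

lemma integral_affine_indicator:
  assumes "prob_space M" "B \<in> sets M"
  shows "(\<integral>y. c + d * indicator B y \<partial>M) = c + d * measure M B"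
proof -
  interpret prob_space M by fact
  have i: "integrable M (indicator B :: _ \<Rightarrow> real)"
    using assms(2) by (intro integrable_real_indicator) (auto simp: emeasure_eq_measure)
  have "(\<integral>y. c + d * indicator B y \<partial>M) = (\<integral>y. c \<partial>M) + (\<integral>y. d * indicator B y \<partial>M)"
    by (rule Bochner_Integration.integral_add) (use i in auto)
  also have "\<dots> = c + d * measure M B"
    using assms(2) by (simp add: prob_space)
  finally show ?thesis .
qed

definition hcnt :: "'a set \<Rightarrow> 'b set \<Rightarrow> nat \<Rightarrow> ('a \<Rightarrow> 'b) \<Rightarrow> real" where
  "hcnt J B k \<omega> = (if k \<le> card {s\<in>J. \<omega> s \<in> B} then 1 else 0)"

lemma hcnt_measurable:
  assumes "finite J" "B \<in> sets M"
  shows "hcnt J B k \<in> borel_measurable (PiM J (\<lambda>_. M))"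
proof -
  have "hcnt J B k = (\<lambda>\<omega>. if real k \<le> (\<Sum>s\<in>J. if \<omega> s \<in> B then 1 else 0) then 1 else 0)"
  proof (intro ext)
    fix x :: "'a \<Rightarrow> 'b"
    have "real (card {s\<in>J. x s \<in> B}) = (\<Sum>s\<in>J. if x s \<in> B then 1 else 0)"
      by (rule card_as_sum[OF assms(1)])
    then have "(k \<le> card {s\<in>J. x s \<in> B}) = (real k \<le> (\<Sum>s\<in>J. if x s \<in> B then 1 else 0))"
      by (metis of_nat_le_iff)
    then show "hcnt J B k x = (if real k \<le> (\<Sum>s\<in>J. if x s \<in> B then 1 else 0) then 1 else 0)"
      unfolding hcnt_def by simp
  qed
  also have "\<dots> \<in> borel_measurable (PiM J (\<lambda>_. M))"
    using assms by measurable
  finally show ?thesis .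
qed

lemma hcnt_integrable:
  assumes "prob_space M" "finite J" "B \<in> sets M"
  shows "integrable (PiM J (\<lambda>_. M)) (hcnt J B k)"
proof -
  interpret P: prob_space "PiM J (\<lambda>_. M)" by (rule prob_space_PiM) (use assms in auto)
  show ?thesis
    by (rule P.integrable_const_bound[where B=1]) (auto simp: hcnt_def hcnt_measurable assms)
qed

lemma tail_integral:
  assumes M: "prob_space M" and B: "B \<in> sets M" and J: "finite J"
  shows "(\<integral>\<omega>. hcnt J B k \<omega> \<partial>PiM J (\<lambda>_. M)) = gtail (card J) k (measure M B)"
  using J
proof (induction J arbitrary: k rule: finite_induct)
  case empty
  show ?case by (cases k) (simp_all add: PiM_empty hcnt_def)
next
  case (insert a J)
  interpret MP: prob_space M by (rule M)
  interpret product_sigma_finite "\<lambda>_. M"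
    using product_prob_spaceI[of "\<lambda>_. M"] M unfolding product_prob_space_def by auto
  interpret PJ: prob_space "PiM J (\<lambda>_. M)" by (rule prob_space_PiM) (use M in auto)
  interpret P': prob_space "PiM (insert a J) (\<lambda>_. M)" by (rule prob_space_PiM) (use M in auto)
  define p where "p = measure M B"
  show ?case
  proof (cases k)
    case 0
    then show ?thesis by (simp add: hcnt_def P'.prob_space)
  next
    case (Suc k')
    have eq: "hcnt (insert a J) B (Suc k') (x(a:=y)) =
        hcnt J B (Suc k') x + (hcnt J B k' x - hcnt J B (Suc k') x) * indicator B y" for x y
    proof -
      have "{s\<in>insert a J. (x(a:=y)) s \<in> B} = (if y \<in> B then insert a {s\<in>J. x s \<in> B} else {s\<in>J. x s \<in> B})"
        using insert(2) by auto
      moreover have "finite {s\<in>J. x s \<in> B}" using insert(1) by simp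
      moreover have "a \<notin> {s\<in>J. x s \<in> B}" using insert(2) by simp
      ultimately show ?thesis by (auto simp: hcnt_def)
    qed
    have "(\<integral>\<omega>. hcnt (insert a J) B k \<omega> \<partial>PiM (insert a J) (\<lambda>_. M))
        = (\<integral>x. (\<integral>y. hcnt (insert a J) B (Suc k') (x(a:=y)) \<partial>M) \<partial>PiM J (\<lambda>_. M))"
      unfolding Suc
      by (rule product_integral_insert[OF insert(1,2)]) (rule hcnt_integrable[OF M _ B], use insert(1) in simp)
    also have "\<dots> = (\<integral>x. hcnt J B (Suc k') x + (hcnt J B k' x - hcnt J B (Suc k') x) * p \<partial>PiM J (\<lambda>_. M))"
      unfolding eq p_def using B
      by (intro Bochner_Integration.integral_cong refl integral_affine_indicator[OF M B])
    also have "\<dots> = gtail (card J) (Suc k') p + (gtail (card J) k' p - gtail (card J) (Suc k') p) * p"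
      using hcnt_integrable[OF M insert(1) B] insert.IH[of k'] insert.IH[of "Suc k'"]
      by (simp add: p_def)
    also have "\<dots> = gtail (card (insert a J)) k p"
      using insert(1,2) Suc by (simp add: algebra_simps)
    finally show ?thesis unfolding p_def .
  qed
qed

lemma score_lower:
  assumes prof: "is_profile n m pos" and m: "m \<ge> 1" and win: "binomial_winner n m pos j"
  shows "n * 2 ^ (m - 1) \<le> binom_score n m pos j"
proof -
  have bij: "bij_betw (pos i) {1..m} {1..m}" if "i \<in> {1..n}" for i
    using prof that unfolding is_profile_def by auto
  have "(\<Sum>j'\<in>{1..m}. binom_score n m pos j') = (\<Sum>i\<in>{1..n}. \<Sum>j'\<in>{1..m}. binom_points m (pos i j'))"
    unfolding binom_score_def by (rule sum.swap)
  also have "\<dots> = (\<Sum>i\<in>{1..n}. \<Sum>k\<in>{1..m}. binom_points m k)"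
    by (intro sum.cong refl sum.reindex_bij_betw bij)
  also have "\<dots> = n * (m * 2 ^ (m - 1))"
    using sum_binom_points[of m] by simp
  finally have eq: "(\<Sum>j'\<in>{1..m}. binom_score n m pos j') = n * (m * 2 ^ (m - 1))" .
  have "(\<Sum>j'\<in>{1..m}. binom_score n m pos j') \<le> card {1..m} * binom_score n m pos j"
    using sum_bounded_above[of "{1..m}" "binom_score n m pos" "binom_score n m pos j"] win
    unfolding binomial_winner_def by simp
  then have "m * (n * 2 ^ (m - 1)) \<le> m * binom_score n m pos j" using eq by (simp add: algebra_simps)
  then show ?thesis using m by simp
qed

lemma median_facts:
  assumes "prob_space D" and sD: "sets D = sets borel" and ae: "AE x in D. x \<in> {0..1}"
  shows "0 \<le> largest_median D" and "measure D {x. largest_median D \<le> x} \<ge> 1/2"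
proof -
  interpret D: prob_space D by fact
  have spD: "space D = UNIV" using sets_eq_imp_space_eq[OF sD] by simp
  have sets_le[simp]: "{x. x \<le> y} \<in> sets D" for y :: real
    unfolding sD by measurable
  have sets_lt[simp]: "{x. y < x} \<in> sets D" for y :: real
    unfolding sD by measurable
  define S where "S = {y. measure D {x. x \<le> y} \<le> 1/2}"
  have nu: "largest_median D = Sup S" unfolding largest_median_def S_def ..
  have neg: "y \<in> S" if "y < 0" for y
  proof -
    have "AE x in D. \<not> x \<le> y" using ae by eventually_elim (use that in auto)
    then have "emeasure D {x\<in>space D. x \<le> y} = 0" by (rule emeasure_eq_0_AE)
    then have "measure D {x. x \<le> y} = 0" using spD by (simp add: D.emeasure_eq_measure)
    then show ?thesis unfolding S_def by simp
  qed
  have big: "measure D {x. x \<le> y} = 1" if "1 \<le> y" for y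
  proof -
    have "AE x in D. \<not> y < x" using ae by eventually_elim (use that in auto)
    then have "emeasure D {x\<in>space D. y < x} = 0" by (rule emeasure_eq_0_AE)
    then have z: "measure D {x. y < x} = 0" using spD by (simp add: D.emeasure_eq_measure)
    have "measure D (space D - {x. y < x}) = 1 - measure D {x. y < x}"
      by (rule D.prob_compl) simp
    moreover have "space D - {x. y < x} = {x. x \<le> y}" using spD by auto
    ultimately show ?thesis using z by simp
  qed
  have bdd: "bdd_above S"
  proof (rule bdd_aboveI)
    fix y assume "y \<in> S"
    then show "y \<le> 1" using big[of y] unfolding S_def by (cases "1 \<le> y") auto
  qed
  have ne: "S \<noteq> {}" using neg[of "-1"] by auto
  show nn: "0 \<le> largest_median D"
  proof (rule ccontr)
    assume "\<not> 0 \<le> largest_median D"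
    then have "Sup S / 2 \<in> S" using neg nu by simp
    then have "Sup S / 2 \<le> Sup S" using bdd by (rule cSup_upper)
    then show False using \<open>\<not> 0 \<le> largest_median D\<close> nu by simp
  qed
  define \<nu> where "\<nu> = largest_median D"
  have below: "measure D {x. x \<le> y} \<le> 1/2" if yl: "y < \<nu>" for y
  proof -
    obtain z where "z \<in> S" "y < z" using yl less_cSup_iff[OF ne bdd] nu \<nu>_def by auto
    then have "measure D {x. x \<le> y} \<le> measure D {x. x \<le> z}"
      by (intro D.finite_measure_mono) auto
    then show ?thesis using \<open>z \<in> S\<close> unfolding S_def by simp
  qed
  define A where "A n = {x. x \<le> \<nu> - 1 / real (Suc n)}" for n
  have inc: "incseq A"
    unfolding A_def incseq_def
  proof (intro allI impI subsetI)
    fix m n :: nat and x assume "m \<le> n" "x \<in> {x. x \<le> \<nu> - 1 / real (Suc m)}"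
    moreover have "1 / real (Suc n) \<le> 1 / real (Suc m)"
      using \<open>m \<le> n\<close> by (intro divide_left_mono) auto
    ultimately show "x \<in> {x. x \<le> \<nu> - 1 / real (Suc n)}" by auto
  qed
  have U: "(\<Union>n. A n) = {x. x < \<nu>}"
  proof (intro set_eqI iffI)
    fix x assume "x \<in> (\<Union>n. A n)"
    then obtain n where "x \<le> \<nu> - 1 / real (Suc n)" unfolding A_def by auto
    moreover have "0 < 1 / real (Suc n)" by simp
    ultimately have "x < \<nu>" by linarith
    then show "x \<in> {x. x < \<nu>}" by simp
  next
    fix x assume "x \<in> {x. x < \<nu>}"
    then obtain n where "inverse (real (Suc n)) < \<nu> - x"
      using reals_Archimedean[of "\<nu> - x"] by auto
    then have "x \<in> A n" unfolding A_def by (simp add: inverse_eq_divide)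
    then show "x \<in> (\<Union>n. A n)" by auto
  qed
  have "(\<lambda>i. measure D (A i)) \<longlonglongrightarrow> measure D (\<Union>i. A i)"
    by (intro D.finite_Lim_measure_incseq inc) (auto simp: A_def)
  then have lt: "measure D {x. x < \<nu>} \<le> 1/2"
    unfolding U
  proof (rule LIMSEQ_le_const2)
    show "\<exists>N. \<forall>n\<ge>N. measure D (A n) \<le> 1/2"
    proof (intro exI allI impI)
      fix n :: nat
      have "\<nu> - 1 / real (Suc n) < \<nu>" by simp
      then show "measure D (A n) \<le> 1/2" unfolding A_def by (rule below)
    qed
  qed
  have "measure D (space D - {x. x < \<nu>}) = 1 - measure D {x. x < \<nu>}"
    by (rule D.prob_compl) (simp add: sD)
  moreover have "space D - {x. x < \<nu>} = {x. \<nu> \<le> x}" using spD by auto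
  ultimately show "measure D {x. largest_median D \<le> x} \<ge> 1/2" using lt \<nu>_def by simp
qed

theorem theorem7:
  fixes D :: "real measure" and n m :: nat and pos :: "nat \<Rightarrow> nat \<Rightarrow> nat" and j :: nat
  assumes "prob_space D"
    and "sets D = sets borel"
    and "AE x in D. x \<in> {0..1}"
    and "m \<ge> 1"
    and "is_profile n m pos"
    and "binomial_winner n m pos j"
  shows "expected_sw D n m pos j \<ge>
           largest_median D / 2 * (MAX j'\<in>{1..m}. expected_sw D n m pos j')"
proof -
  note Dp = assms(1) and sD = assms(2) and ae = assms(3) and m1 = assms(4)
  interpret D: prob_space D by (rule Dp)
  define K where "K = {1..n} \<times> {..<m}"
  define P where "P = sample_space n m D"
  have P_eq: "P = PiM K (\<lambda>_. D)" unfolding P_def K_def sample_space_def ..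
  have finK: "finite K" unfolding K_def by simp
  interpret PP: prob_space P unfolding P_eq by (rule prob_space_PiM) (rule Dp)
  interpret PS: product_prob_space "\<lambda>_. D" by (rule product_prob_spaceI) (rule Dp)
  have spD: "space D = UNIV" using sets_eq_imp_space_eq[OF sD] by simp
  define \<nu> where "\<nu> = largest_median D"
  define B where "B = {x::real. \<nu> \<le> x}"
  have B_sets: "B \<in> sets D" unfolding B_def sD by measurable
  define p where "p = measure D B"
  have nu0: "0 \<le> \<nu>" unfolding \<nu>_def by (rule median_facts(1)[OF Dp sD ae])
  have p_half: "1/2 \<le> p" unfolding p_def B_def \<nu>_def by (rule median_facts(2)[OF Dp sD ae])
  have p1: "p \<le> 1" unfolding p_def by simp
  define U where "U i k \<omega> = kth_largest m (\<lambda>s. \<omega> (i, s)) k" for i k and \<omega> :: "nat \<times> nat \<Rightarrow> real"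
  define J where "J i = {i} \<times> {..<m}" for i :: nat
  have comp_meas: "(\<lambda>\<omega>. \<omega> q) \<in> borel_measurable P" if "q \<in> K" for q
  proof -
    have "(\<lambda>\<omega>. \<omega> q) \<in> measurable P D"
      unfolding P_eq using that by (rule measurable_component_singleton)
    then show ?thesis using measurable_cong_sets[OF refl sD, of P] by metis
  qed
  have U_meas: "U i k \<in> borel_measurable P" if "i \<in> {1..n}" "k \<in> {1..m}" for i k
    unfolding U_def[abs_def]
    by (rule kth_measurable[where f="\<lambda>s \<omega>. \<omega> (i, s)"]) (use that in \<open>auto intro!: comp_meas simp: K_def\<close>)
  have AEb: "AE \<omega> in P. \<forall>q\<in>K. \<omega> q \<in> {0..1}"
  proof (intro AE_finite_allI finK)
    fix q assume "q \<in> K"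
    show "AE \<omega> in P. \<omega> q \<in> {0..1}"
      unfolding P_eq by (rule AE_PiM_component[where P="\<lambda>x. x \<in> {0..1}"]) (use Dp ae \<open>q \<in> K\<close> in auto)
  qed
  have bounds: "0 \<le> U i k \<omega> \<and> U i k \<omega> \<le> 1 \<and> \<nu> * hcnt (J i) B k \<omega> \<le> U i k \<omega>"
    if w: "\<forall>q\<in>K. \<omega> q \<in> {0..1}" and i: "i \<in> {1..n}" and k: "k \<in> {1..m}" for i k \<omega>
  proof -
    have k1: "1 \<le> k" "k \<le> m" using k by auto
    have wi: "\<omega> (i, s) \<in> {0..1}" if "s < m" for s using w i that unfolding K_def by auto
    have "{s. s < m \<and> 0 \<le> \<omega> (i, s)} = {..<m}" using wi by auto
    then have U0: "0 \<le> U i k \<omega>" unfolding U_def using kth_ge_iff[OF k1, of 0] k1 by simp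
    have "k \<le> card {s. s < m \<and> U i k \<omega> \<le> \<omega> (i, s)}"
      using kth_ge_iff[OF k1, of "U i k \<omega>" "\<lambda>s. \<omega> (i, s)"] unfolding U_def by simp
    then have "{s. s < m \<and> U i k \<omega> \<le> \<omega> (i, s)} \<noteq> {}" using k1 by (metis card.empty le_zero_eq one_neq_zero)
    then obtain s where "s < m" "U i k \<omega> \<le> \<omega> (i, s)" by auto
    then have U1: "U i k \<omega> \<le> 1" using wi[of s] by auto
    have "{q\<in>J i. \<omega> q \<in> B} = (\<lambda>s. (i, s)) ` {s. s < m \<and> \<nu> \<le> \<omega> (i, s)}"
      unfolding J_def B_def by auto
    then have cnt: "card {q\<in>J i. \<omega> q \<in> B} = card {s. s < m \<and> \<nu> \<le> \<omega> (i, s)}"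
      by (simp add: card_image inj_on_def)
    have "\<nu> * hcnt (J i) B k \<omega> \<le> U i k \<omega>"
    proof (cases "k \<le> card {s. s < m \<and> \<nu> \<le> \<omega> (i, s)}")
      case True
      then have "\<nu> \<le> U i k \<omega>" unfolding U_def using kth_ge_iff[OF k1] by simp
      then show ?thesis using True cnt unfolding hcnt_def by simp
    next
      case False
      then show ?thesis using U0 cnt unfolding hcnt_def by simp
    qed
    then show ?thesis using U0 U1 by simp
  qed
  have posin: "pos i j' \<in> {1..m}" if "i \<in> {1..n}" "j' \<in> {1..m}" for i j'
    using assms(5) that unfolding is_profile_def by (meson bij_betw_apply)
  have sw_eq: "expected_sw D n m pos j' = (\<integral>\<omega>. (\<Sum>i\<in>{1..n}. U i (pos i j') \<omega>) \<partial>P)" for j'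
    unfolding expected_sw_def sw_def utility_def U_def P_def ..
  have U_int: "integrable P (U i k)" if "i \<in> {1..n}" "k \<in> {1..m}" for i k
  proof (rule PP.integrable_const_bound[where B=1])
    show "AE x in P. norm (U i k x) \<le> 1"
      using AEb by eventually_elim (use bounds that in auto)
  qed (rule U_meas[OF that])
  have upper: "expected_sw D n m pos j' \<le> n" if j': "j' \<in> {1..m}" for j'
  proof -
    have "(\<integral>\<omega>. (\<Sum>i\<in>{1..n}. U i (pos i j') \<omega>) \<partial>P) \<le> (\<integral>\<omega>. real n \<partial>P)"
    proof (rule integral_mono_AE)
      show "integrable P (\<lambda>\<omega>. \<Sum>i\<in>{1..n}. U i (pos i j') \<omega>)"
        using U_int posin j' by (intro Bochner_Integration.integrable_sum) auto
      show "AE \<omega> in P. (\<Sum>i\<in>{1..n}. U i (pos i j') \<omega>) \<le> real n"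
        using AEb
      proof eventually_elim
        case (elim \<omega>)
        have "(\<Sum>i\<in>{1..n}. U i (pos i j') \<omega>) \<le> (\<Sum>i\<in>{1..n}. 1)"
          using bounds[OF elim] posin j' by (intro sum_mono) auto
        then show ?case by simp
      qed
    qed simp
    then show ?thesis unfolding sw_eq by (simp add: PP.prob_space)
  qed
  have marg: "(\<integral>\<omega>. hcnt (J i) B k \<omega> \<partial>P) = gtail m k p" if i: "i \<in> {1..n}" for i k
  proof -
    have JK: "J i \<subseteq> K" using i unfolding J_def K_def by auto
    have finJ: "finite (J i)" unfolding J_def by simp
    have "(\<integral>\<omega>. hcnt (J i) B k \<omega> \<partial>PiM (J i) (\<lambda>_. D))
        = (\<integral>\<omega>. hcnt (J i) B k \<omega> \<partial>distr (PiM K (\<lambda>_. D)) (PiM (J i) (\<lambda>_. D)) (\<lambda>f. restrict f (J i)))"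
      using PS.distr_restrict[OF JK finK] by simp
    also have "\<dots> = (\<integral>\<omega>. hcnt (J i) B k (restrict \<omega> (J i)) \<partial>PiM K (\<lambda>_. D))"
      by (rule integral_distr) (auto intro: measurable_restrict_subset[OF JK] hcnt_measurable[OF finJ B_sets])
    also have "\<dots> = (\<integral>\<omega>. hcnt (J i) B k \<omega> \<partial>PiM K (\<lambda>_. D))"
    proof (intro Bochner_Integration.integral_cong refl)
      fix \<omega> :: "nat \<times> nat \<Rightarrow> real"
      have "{s\<in>J i. restrict \<omega> (J i) s \<in> B} = {s\<in>J i. \<omega> s \<in> B}" by auto
      then show "hcnt (J i) B k (restrict \<omega> (J i)) = hcnt (J i) B k \<omega>" unfolding hcnt_def by simp
    qed
    finally have "(\<integral>\<omega>. hcnt (J i) B k \<omega> \<partial>P) = (\<integral>\<omega>. hcnt (J i) B k \<omega> \<partial>PiM (J i) (\<lambda>_. D))"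
      unfolding P_eq by simp
    also have "\<dots> = gtail (card (J i)) k p"
      unfolding p_def by (rule tail_integral[OF Dp B_sets finJ])
    also have "card (J i) = m" unfolding J_def by simp
    finally show ?thesis .
  qed
  have hres: "hcnt (J i) B k (restrict \<omega> (J i)) = hcnt (J i) B k \<omega>" for i k \<omega>
  proof -
    have "{s\<in>J i. restrict \<omega> (J i) s \<in> B} = {s\<in>J i. \<omega> s \<in> B}" by auto
    then show ?thesis unfolding hcnt_def by simp
  qed
  have hmeas: "hcnt (J i) B k \<in> borel_measurable P" if i: "i \<in> {1..n}" for i k
  proof -
    have JK: "J i \<subseteq> K" using i unfolding J_def K_def by auto
    have finJ: "finite (J i)" unfolding J_def by simp
    have "(\<lambda>\<omega>. hcnt (J i) B k (restrict \<omega> (J i))) \<in> borel_measurable (PiM K (\<lambda>_. D))"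
      by (rule measurable_compose[OF measurable_restrict_subset[OF JK] hcnt_measurable[OF finJ B_sets]])
    then show ?thesis unfolding hres P_eq .
  qed
  have hint: "integrable P (hcnt (J i) B k)" if i: "i \<in> {1..n}" for i k
    by (rule PP.integrable_const_bound[where B=1]) (auto simp: hcnt_def intro!: hmeas i)
  have jin: "j \<in> {1..m}" using assms(6) unfolding binomial_winner_def by simp
  have lower: "\<nu> * (\<Sum>i\<in>{1..n}. gtail m (pos i j) p) \<le> expected_sw D n m pos j"
  proof -
    have "(\<integral>\<omega>. (\<Sum>i\<in>{1..n}. \<nu> * hcnt (J i) B (pos i j) \<omega>) \<partial>P) \<le> (\<integral>\<omega>. (\<Sum>i\<in>{1..n}. U i (pos i j) \<omega>) \<partial>P)"
    proof (rule integral_mono_AE)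
      show "integrable P (\<lambda>\<omega>. \<Sum>i\<in>{1..n}. U i (pos i j) \<omega>)"
        using U_int posin jin by (intro Bochner_Integration.integrable_sum) auto
      show "integrable P (\<lambda>\<omega>. \<Sum>i\<in>{1..n}. \<nu> * hcnt (J i) B (pos i j) \<omega>)"
      proof (intro Bochner_Integration.integrable_sum integrable_mult_right)
        fix i assume "i \<in> {1..n}"
        show "integrable P (hcnt (J i) B (pos i j))"
          by (rule PP.integrable_const_bound[where B=1])
             (auto simp: hcnt_def intro!: hmeas \<open>i \<in> {1..n}\<close>)
      qed
      show "AE \<omega> in P. (\<Sum>i\<in>{1..n}. \<nu> * hcnt (J i) B (pos i j) \<omega>) \<le> (\<Sum>i\<in>{1..n}. U i (pos i j) \<omega>)"
        using AEb
      proof eventually_elim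
        case (elim \<omega>)
        show ?case using bounds[OF elim] posin jin by (intro sum_mono) auto
      qed
    qed
    moreover have "(\<integral>\<omega>. (\<Sum>i\<in>{1..n}. \<nu> * hcnt (J i) B (pos i j) \<omega>) \<partial>P) = \<nu> * (\<Sum>i\<in>{1..n}. gtail m (pos i j) p)"
    proof -
      have "(\<integral>\<omega>. (\<Sum>i\<in>{1..n}. \<nu> * hcnt (J i) B (pos i j) \<omega>) \<partial>P) = (\<Sum>i\<in>{1..n}. (\<integral>\<omega>. \<nu> * hcnt (J i) B (pos i j) \<omega> \<partial>P))"
        by (intro Bochner_Integration.integral_sum integrable_mult_right hint)
      also have "\<dots> = (\<Sum>i\<in>{1..n}. \<nu> * gtail m (pos i j) p)"
        using marg by (intro sum.cong refl) simp
      finally show ?thesis by (simp add: sum_distrib_left)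
    qed
    ultimately show ?thesis unfolding sw_eq by simp
  qed
  have "\<nu> * (n / 2) \<le> \<nu> * (\<Sum>i\<in>{1..n}. gtail m (pos i j) p)"
  proof (rule mult_left_mono[OF _ nu0])
    have "(\<Sum>i\<in>{1..n}. gtail m (pos i j) (1/2)) \<le> (\<Sum>i\<in>{1..n}. gtail m (pos i j) p)"
      using p_half p1 by (intro sum_mono gtail_mono) auto
    moreover have "(\<Sum>i\<in>{1..n}. gtail m (pos i j) (1/2)) = real (binom_score n m pos j) / 2 ^ m"
      unfolding gtail_half binom_score_def by (simp add: sum_divide_distrib)
    moreover have "real n * 2 ^ (m - 1) \<le> real (binom_score n m pos j)"
      using score_lower[OF assms(5) m1 assms(6)] by (metis of_nat_le_iff of_nat_mult of_nat_numeral of_nat_power)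
    moreover have "(2::real) ^ m = 2 * 2 ^ (m - 1)" using m1 by (metis power_Suc Suc_diff_1 less_le_trans zero_less_one)
    ultimately have X: "X \<le> Y" "b = 2 ^ m * X" "real n * Q \<le> b" "(2::real) ^ m = 2 * Q"
      if "X = (\<Sum>i\<in>{1..n}. gtail m (pos i j) (1/2))" "Y = (\<Sum>i\<in>{1..n}. gtail m (pos i j) p)"
         "b = real (binom_score n m pos j)" "Q = (2::real) ^ (m - 1)" for X Y b Q
      using that by auto
    have Qpos: "(0::real) < 2 ^ (m - 1)" by simp
    have "real n * 2 ^ (m - 1) \<le> 2 * 2 ^ (m - 1) * (\<Sum>i\<in>{1..n}. gtail m (pos i j) (1/2))"
      using X[OF refl refl refl refl] by simp
    then have "real n \<le> 2 * (\<Sum>i\<in>{1..n}. gtail m (pos i j) (1/2))"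
      using Qpos by (simp add: mult.assoc mult.left_commute[of "2 ^ (m-1)"])
    then show "real n / 2 \<le> (\<Sum>i\<in>{1..n}. gtail m (pos i j) p)"
      using X(1)[OF refl refl refl refl] by simp
  qed
  moreover have "(MAX j'\<in>{1..m}. expected_sw D n m pos j') \<le> n"
    using upper m1 by (subst Max_le_iff) auto
  then have "\<nu> / 2 * (MAX j'\<in>{1..m}. expected_sw D n m pos j') \<le> \<nu> / 2 * n"
    using nu0 by (intro mult_left_mono) auto
  ultimately show ?thesis using lower unfolding \<nu>_def[symmetric] by simp
qed

end
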